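(* Let $\epsilon>0$ and let $Q$ be the angle variable described in the context, defined on $\mathbb{R}^2\setminus\{(0,0)\}$ with values in $\mathbb{R}/2\pi\mathbb{Z}$. Then the level set $\{x=0\}$ in the $(x,v)$-plane equals $\{Q=\frac{\pi}{2}\}\cup\{Q=-\frac{\pi}{2}\}\cup\{(x,v)=(0,0)\}$.
   Context: Let $\Phi(x)=\frac{x^2}{2}+\frac{\epsilon x^4}{2}$ and $H(x,v)=\frac{v^2}{2}+\Phi(x)$. For $(x,v)\neq(0,0)$ define the angle $\chi\in\mathbb{R}/2\pi\mathbb{Z}$ by $\chi=\arcsin\big(v/\sqrt{2H}\big)$ if $x>0$ and $\chi=\pi-\arcsin\big(v/\sqrt{2H}\big)$ if $x\leq 0$; then $(x,v)\mapsto(\chi,H)$ is a bijection onto $(\mathbb{R}/2\pi\mathbb{Z})\times(0,\infty)$, and we write $x=x(\chi,H)$. Set $a(\chi,H)=\sqrt{2}\,\frac{1+2\epsilon x^2}{\sqrt{1+\epsilon x^2}}$ with $x=x(\chi,H)$. Define $c(H)>0$ by $c(H)\int_0^{2\pi}\frac{\mathrm{d}\chi}{a(\chi,H)}=2\pi$, and $Q(\chi,H)=c(H)\int_0^{\chi}\frac{\mathrm{d}\chi'}{a(\chi',H)}$ (well defined modulo $2\pi$). *)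

theory Defs
  imports "HOL-Analysis.Analysis"
begin

definition angle_eq :: "real \<Rightarrow> real \<Rightarrow> bool" where
  "angle_eq a b \<longleftrightarrow> (\<exists>k::int. a - b = 2 * pi * of_int k)"

definition Phi :: "real \<Rightarrow> real \<Rightarrow> real" where
  "Phi eps x = x^2 / 2 + eps * x^4 / 2"

definition Ham :: "real \<Rightarrow> real \<Rightarrow> real \<Rightarrow> real" where
  "Ham eps x v = v^2 / 2 + Phi eps x"

text \<open>The angle chi(x,v) (a real representative of the class in R / 2 pi Z).\<close>
definition chi :: "real \<Rightarrow> real \<Rightarrow> real \<Rightarrow> real" where
  "chi eps x v = (if x > 0 then arcsin (v / sqrt (2 * Ham eps x v))
                  else pi - arcsin (v / sqrt (2 * Ham eps x v)))"

definition xcoord :: "real \<Rightarrow> real \<Rightarrow> real \<Rightarrow> real" where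
  "xcoord eps ch h = (THE x. \<exists>v. (x, v) \<noteq> (0, 0) \<and> Ham eps x v = h \<and> angle_eq (chi eps x v) ch)"

definition afun :: "real \<Rightarrow> real \<Rightarrow> real \<Rightarrow> real" where
  "afun eps ch h = (let x = xcoord eps ch h in
      sqrt 2 * (1 + 2 * eps * x^2) / sqrt (1 + eps * x^2))"

definition oint :: "(real \<Rightarrow> real) \<Rightarrow> real \<Rightarrow> real" where
  "oint f t = (if 0 \<le> t then integral {0..t} f else - integral {t..0} f)"

definition cfun :: "real \<Rightarrow> real \<Rightarrow> real" where
  "cfun eps h = (THE c. c > 0 \<and> c * integral {0..2*pi} (\<lambda>ch. 1 / afun eps ch h) = 2 * pi)"

definition Qfun :: "real \<Rightarrow> real \<Rightarrow> real \<Rightarrow> real" where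
  "Qfun eps ch h = cfun eps h * oint (\<lambda>ch'. 1 / afun eps ch' h) ch"

definition Qxv :: "real \<Rightarrow> real \<Rightarrow> real \<Rightarrow> real" where
  "Qxv eps x v = Qfun eps (chi eps x v) (Ham eps x v)"

end

theory Submission
  imports Defs
begin

lemma oint_eq:
  fixes f :: "real \<Rightarrow> real"
  assumes c: "continuous_on UNIV f" and a: "a \<le> 0" "a \<le> u"
  shows "oint f u = integral {a..u} f - integral {a..0} f"
proof (cases "0 \<le> u")
  case True
  have "integral {a..0} f + integral {0..u} f = integral {a..u} f"
    by (rule Henstock_Kurzweil_Integration.integral_combine) (use a True in \<open>auto intro: integrable_continuous_real continuous_on_subset[OF c]\<close>)
  then show ?thesis using True by (simp add: oint_def)
next
  case False
  have "integral {a..u} f + integral {u..0} f = integral {a..0} f"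
    by (rule Henstock_Kurzweil_Integration.integral_combine) (use a False in \<open>auto intro: integrable_continuous_real continuous_on_subset[OF c]\<close>)
  then show ?thesis using False by (simp add: oint_def)
qed

lemma oint_deriv:
  fixes f :: "real \<Rightarrow> real"
  assumes c: "continuous_on UNIV f"
  shows "DERIV (oint f) t :> f t"
proof -
  define a where "a = min t 0 - 1"
  define b where "b = t + 1"
  have "((\<lambda>x. integral {a..x} f) has_real_derivative f t) (at t within {a..b})"
    by (rule integral_has_real_derivative) (auto simp: a_def b_def intro: continuous_on_subset[OF c])
  moreover have "at t within {a..b} = at t" by (rule at_within_Icc_at) (auto simp: a_def b_def)
  ultimately have "((\<lambda>x. integral {a..x} f) has_real_derivative f t) (at t)" by simp
  then have "((\<lambda>x. integral {a..x} f - integral {a..0} f) has_real_derivative f t) (at t)"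
    by (auto intro!: derivative_eq_intros)
  then show ?thesis
    by (rule has_field_derivative_transform_within_open[where S="{a<..}"])
       (auto simp: a_def intro!: oint_eq[OF c, symmetric])
qed

lemma oint_0: "oint f 0 = 0" by (simp add: oint_def)

lemma sym_facts:
  fixes f :: "real \<Rightarrow> real"
  assumes c: "continuous_on UNIV f"
    and s1: "\<And>t. f (-t) = f t" and s2: "\<And>t. f (pi - t) = f t" and s3: "\<And>t. f (t + pi) = f t"
  shows "oint f (-t) = - oint f t" "oint f t + oint f (pi - t) = oint f pi"
    "oint f (t + pi) - oint f t = oint f pi"
proof -
  note D = oint_deriv[OF c]
  have d1: "DERIV (\<lambda>t. oint f (-t) + oint f t) x :> 0" for x
  proof -
    have "DERIV (\<lambda>t. oint f (-t)) x :> f (-x) * (-1)"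
      by (rule DERIV_chain2[OF D]) (auto intro!: derivative_eq_intros)
    from DERIV_add[OF this D] show ?thesis by (simp add: s1)
  qed
  from DERIV_isconst_all[OF allI[OF d1], of t 0]
  show "oint f (-t) = - oint f t" by (simp add: oint_0)
  have d2: "DERIV (\<lambda>t. oint f t + oint f (pi - t)) x :> 0" for x
  proof -
    have "DERIV (\<lambda>t. oint f (pi - t)) x :> f (pi - x) * (-1)"
      by (rule DERIV_chain2[OF D]) (auto intro!: derivative_eq_intros)
    from DERIV_add[OF D this] show ?thesis by (simp add: s2)
  qed
  from DERIV_isconst_all[OF allI[OF d2], of t 0]
  show "oint f t + oint f (pi - t) = oint f pi" by (simp add: oint_0)
  have d3: "DERIV (\<lambda>t. oint f (t + pi) - oint f t) x :> 0" for x
  proof -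
    have "DERIV (\<lambda>t. oint f (t + pi)) x :> f (x + pi) * 1"
      by (rule DERIV_chain2[OF D]) (auto intro!: derivative_eq_intros)
    from DERIV_diff[OF this D] show ?thesis by (simp add: s3)
  qed
  from DERIV_isconst_all[OF allI[OF d3], of t 0]
  show "oint f (t + pi) - oint f t = oint f pi" by (simp add: oint_0)
qed

lemma oint_mono:
  fixes f :: "real \<Rightarrow> real"
  assumes c: "continuous_on UNIV f" and p: "\<And>t. f t > 0" and "a < b"
  shows "oint f a < oint f b"
  by (rule DERIV_pos_imp_increasing[OF \<open>a < b\<close>]) (use oint_deriv[OF c] p in blast)

definition Xf :: "real \<Rightarrow> real \<Rightarrow> real \<Rightarrow> real" where
  "Xf eps h s = (sqrt (1 + 8 * eps * h * s) - 1) / (2 * eps)"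

lemma Xf_nonneg: "eps > 0 \<Longrightarrow> h > 0 \<Longrightarrow> s \<ge> 0 \<Longrightarrow> Xf eps h s \<ge> 0"
  unfolding Xf_def by (auto simp: field_simps)

lemma Xf_pos: "eps > 0 \<Longrightarrow> h > 0 \<Longrightarrow> s > 0 \<Longrightarrow> Xf eps h s > 0"
  unfolding Xf_def by (auto simp: field_simps)

lemma quad_solve:
  assumes e: "eps > 0" and y: "y \<ge> 0" and h: "h > 0" and s: "s \<ge> 0"
  shows "y + eps * y^2 = 2 * h * s \<longleftrightarrow> y = Xf eps h s"
proof
  assume a: "y + eps * y^2 = 2 * h * s"
  have "(2 * eps * y + 1)^2 = 1 + 8 * eps * h * s"
  proof -
    have "(2 * eps * y + 1)^2 = 4 * eps * (y + eps * y^2) + 1" by (simp add: power2_eq_square algebra_simps)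
    also have "\<dots> = 1 + 8 * eps * h * s" unfolding a by simp
    finally show ?thesis .
  qed
  then have "sqrt (1 + 8 * eps * h * s) = 2 * eps * y + 1"
    by (rule real_sqrt_unique) (use e y in auto)
  then show "y = Xf eps h s" using e unfolding Xf_def by (simp add: field_simps)
next
  assume a: "y = Xf eps h s"
  have q: "sqrt (1 + 8 * eps * h * s) ^ 2 = 1 + 8 * eps * h * s" using e h s by simp
  have "sqrt (1 + 8 * eps * h * s) = 2 * eps * y + 1" using a e unfolding Xf_def by (simp add: field_simps)
  then have "(2 * eps * y + 1)^2 = 1 + 8 * eps * h * s" using q by simp
  then have "4 * eps * (y + eps * y^2) = 4 * eps * (2 * h * s)" by (simp add: power2_eq_square algebra_simps)
  then show "y + eps * y^2 = 2 * h * s" using e by simp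
qed

lemma angle_eq_sincos: "angle_eq a b \<Longrightarrow> sin a = sin b \<and> cos a = cos b"
  unfolding angle_eq_def
proof (elim exE)
  fix k :: int assume "a - b = 2 * pi * of_int k"
  then have "a = b + 2 * pi * of_int k" by simp
  then show ?thesis using sin_cos_eq_iff by blast
qed

lemma sincos_angle_eq: "sin a = sin b \<Longrightarrow> cos a = cos b \<Longrightarrow> angle_eq a b"
  unfolding angle_eq_def using sin_cos_eq_iff[of a b] by force

lemma chi_props:
  assumes e: "eps > 0" and nz: "(x, v) \<noteq> (0, 0)" and H: "Ham eps x v = h"
  defines "s \<equiv> v / sqrt (2 * h)"
  shows "h > 0" "-1 \<le> s" "s \<le> 1" "x \<noteq> 0 \<Longrightarrow> s^2 < 1"
    "sin (chi eps x v) = s"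
    "cos (chi eps x v) = (if x > 0 then sqrt (1 - s^2) else - sqrt (1 - s^2))"
    "Phi eps x = h * (1 - s^2)"
proof -
  have Pn: "Phi eps x \<ge> 0" using e by (simp add: Phi_def)
  have Pp: "x \<noteq> 0 \<Longrightarrow> Phi eps x > 0" using e by (simp add: Phi_def add_pos_nonneg)
  show hp: "h > 0"
  proof (cases "x = 0")
    case True then have "v \<noteq> 0" using nz by auto
    then show ?thesis using H Pn by (auto simp: Ham_def intro: add_pos_nonneg)
  next
    case False then show ?thesis using H Pp[OF False] by (auto simp: Ham_def intro: add_nonneg_pos)
  qed
  have s2: "s^2 = v^2 / (2 * h)" using hp by (simp add: s_def power_divide)
  show Ph: "Phi eps x = h * (1 - s^2)" using H hp unfolding s2 by (simp add: Ham_def field_simps) (metis distrib_left)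
  have "s^2 \<le> 1" using Ph Pn hp by (metis diff_ge_0_iff_ge zero_le_mult_iff not_le)
  then have sa: "\<bar>s\<bar> \<le> 1" by (simp add: abs_square_le_1)
  then show "-1 \<le> s" "s \<le> 1" by auto
  show "x \<noteq> 0 \<Longrightarrow> s^2 < 1" using Ph Pp hp by (metis diff_gt_0_iff_gt zero_less_mult_iff not_le less_le)
  have chi_eq: "chi eps x v = (if x > 0 then arcsin s else pi - arcsin s)"
    using H by (simp add: chi_def s_def)
  show "sin (chi eps x v) = s" using sa unfolding chi_eq by (auto simp: sin_arcsin)
  show "cos (chi eps x v) = (if x > 0 then sqrt (1 - s^2) else - sqrt (1 - s^2))"
    using sa unfolding chi_eq by (auto simp: cos_arcsin)
qed

lemma P_char:
  assumes e: "eps > 0" and nz: "(x, v) \<noteq> (0, 0)" and H: "Ham eps x v = h"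
    and A: "angle_eq (chi eps x v) ch"
  shows "x^2 = Xf eps h ((cos ch)^2) \<and> (x > 0 \<longleftrightarrow> cos ch > 0)"
proof -
  define s where "s = v / sqrt (2*h)"
  note cp = chi_props[OF e nz H, folded s_def]
  have sc: "sin ch = s" "cos ch = (if x > 0 then sqrt (1 - s^2) else - sqrt (1 - s^2))"
    using angle_eq_sincos[OF A] cp by auto
  have s1: "s^2 \<le> 1" using cp(2,3) by (simp add: abs_square_le_1 abs_le_iff)
  then have c2: "(cos ch)^2 = 1 - s^2" using sc(2) by auto
  have "x^2 + eps * (x^2)^2 = 2 * h * (cos ch)^2"
    using cp(7) unfolding c2 by (simp add: Phi_def power_mult_distrib[symmetric] field_simps)
  then have "x^2 = Xf eps h ((cos ch)^2)" using quad_solve[OF e _ cp(1), of "x^2" "(cos ch)^2"] by simp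
  moreover have "x > 0 \<longleftrightarrow> cos ch > 0"
  proof (cases "x > 0")
    case True
    then have "s^2 < 1" using cp(4) by auto
    then show ?thesis using True sc(2) by auto
  next
    case False then show ?thesis using sc(2) s1 by auto
  qed
  ultimately show ?thesis by blast
qed

lemma P_exists:
  assumes e: "eps > 0" and h: "h > 0"
  shows "\<exists>x v. (x, v) \<noteq> (0, 0) \<and> Ham eps x v = h \<and> angle_eq (chi eps x v) ch"
proof -
  define X where "X = Xf eps h ((cos ch)^2)"
  have X0: "X \<ge> 0" using Xf_nonneg[OF e h] by (simp add: X_def)
  have Xq: "X + eps * X^2 = 2 * h * (cos ch)^2"
    using quad_solve[OF e X0 h, of "(cos ch)^2"] by (simp add: X_def)
  define x where "x = (if cos ch > 0 then sqrt X else - sqrt X)"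
  define v where "v = sqrt (2*h) * sin ch"
  have x2: "x^2 = X" using X0 by (simp add: x_def)
  have x4: "x^4 = X^2" using x2 by (auto simp: power_mult[symmetric])
  have HH: "Ham eps x v = h"
  proof -
    have "Ham eps x v = h * (sin ch)^2 + (X + eps * X^2) / 2"
      using h by (simp add: Ham_def Phi_def v_def x2 x4 power_mult_distrib add_divide_distrib)
    also have "\<dots> = h * (sin ch)^2 + h * (cos ch)^2" unfolding Xq by simp
    also have "\<dots> = h * ((sin ch)^2 + (cos ch)^2)" by (simp only: distrib_left)
    also have "\<dots> = h" by (simp only: sin_cos_squared_add mult_1_right)
    finally show ?thesis .
  qed
  have nz: "(x, v) \<noteq> (0, 0)"
  proof
    assume "(x, v) = (0, 0)"
    then have "x = 0" "v = 0" by auto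
    then have "sin ch = 0" "X = 0" using h x2 by (auto simp: v_def)
    then have "(cos ch)^2 = 1" "Xf eps h ((cos ch)^2) = 0" using sin_cos_squared_add[of ch] by (auto simp: X_def)
    then show False using Xf_pos[OF e h, of 1] by simp
  qed
  define s where "s = v / sqrt (2*h)"
  have ss: "s = sin ch" using h by (simp add: s_def v_def)
  note cp = chi_props[OF e nz HH, folded s_def]
  have "1 - s^2 = (cos ch)^2" unfolding ss using sin_cos_squared_add[of ch] by linarith
  then have cc: "sqrt (1 - s^2) = \<bar>cos ch\<bar>" by simp
  have "cos (chi eps x v) = cos ch"
  proof (cases "cos ch > 0")
    case True
    then have "X > 0" using Xf_pos[OF e h, of "(cos ch)^2"] by (simp add: X_def)
    then have "x > 0" using True by (simp add: x_def)
    then show ?thesis using cp(6) cc True by simp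
  next
    case False
    then have "\<not> x > 0" using X0 by (simp add: x_def)
    then show ?thesis using cp(6) cc False by simp
  qed
  moreover have "sin (chi eps x v) = sin ch" using cp(5) ss by simp
  ultimately have "angle_eq (chi eps x v) ch" by (simp add: sincos_angle_eq)
  then show ?thesis using nz HH by blast
qed

lemma xcoord_sq:
  assumes e: "eps > 0" and h: "h > 0"
  shows "(xcoord eps ch h)^2 = Xf eps h ((cos ch)^2)"
proof -
  let ?P = "\<lambda>x. \<exists>v. (x, v) \<noteq> (0, 0) \<and> Ham eps x v = h \<and> angle_eq (chi eps x v) ch"
  obtain x0 where x0: "?P x0" using P_exists[OF e h] by blast
  have ch: "?P x \<Longrightarrow> x^2 = Xf eps h ((cos ch)^2) \<and> (x > 0 \<longleftrightarrow> cos ch > 0)" for x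
    using P_char[OF e] by blast
  have uq: "?P x \<Longrightarrow> x = x0" for x
  proof -
    assume "?P x"
    from ch[OF this] ch[OF x0] have "x^2 = x0^2" "x > 0 \<longleftrightarrow> x0 > 0" by auto
    then have "x = x0 \<or> x = - x0" "x > 0 \<longleftrightarrow> x0 > 0" by (simp_all add: power2_eq_iff)
    then show "x = x0" by auto
  qed
  have "?P (xcoord eps ch h)" unfolding xcoord_def by (rule theI[of ?P x0, OF x0 uq])
  then show ?thesis using ch by blast
qed

definition ff :: "real \<Rightarrow> real \<Rightarrow> real \<Rightarrow> real" where
  "ff eps h t = 1 / (sqrt 2 * (1 + 2 * eps * Xf eps h ((cos t)^2)) / sqrt (1 + eps * Xf eps h ((cos t)^2)))"

lemma afun_ff: "eps > 0 \<Longrightarrow> h > 0 \<Longrightarrow> (\<lambda>ch. 1 / afun eps ch h) = ff eps h"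
  by (rule ext) (simp add: afun_def ff_def xcoord_sq Let_def)

lemma ff_pos: "eps > 0 \<Longrightarrow> h > 0 \<Longrightarrow> ff eps h t > 0"
  using Xf_nonneg[of eps h "(cos t)^2"] unfolding ff_def
  by (auto intro!: divide_pos_pos add_pos_nonneg mult_pos_pos)

lemma ff_cont: "eps > 0 \<Longrightarrow> h > 0 \<Longrightarrow> continuous_on UNIV (ff eps h)"
  unfolding ff_def Xf_def
  apply (auto intro!: continuous_intros)
  subgoal for x by (subgoal_tac "0 \<le> 8 * eps * h * (cos x)^2") (simp, auto)
  done

lemma angle_eq_small: "angle_eq a b \<Longrightarrow> \<bar>a - b\<bar> < 2 * pi \<Longrightarrow> a = b"
proof -
  assume "angle_eq a b" "\<bar>a - b\<bar> < 2 * pi"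
  then obtain k :: int where k: "a - b = 2 * pi * of_int k" "\<bar>2 * pi * of_int k\<bar> < 2 * pi"
    unfolding angle_eq_def by auto
  then have "\<bar>real_of_int k\<bar> < 1" by (simp add: abs_mult)
  then have "k = 0" by linarith
  then show "a = b" using k by simp
qed

lemma main_pt:
  assumes e: "eps > 0" and nz: "(x, v) \<noteq> (0, 0)"
  shows "x = 0 \<longleftrightarrow> (angle_eq (Qxv eps x v) (pi / 2) \<or> angle_eq (Qxv eps x v) (- pi / 2))"
proof -
  define h where "h = Ham eps x v"
  define s where "s = v / sqrt (2*h)"
  note cp = chi_props[OF e nz h_def[symmetric], folded s_def]
  have hp: "h > 0" by (rule cp(1))
  define f where "f = ff eps h"
  define F where "F = oint f"
  have fc: "continuous_on UNIV f" unfolding f_def by (rule ff_cont[OF e hp])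
  have fp: "\<And>t. f t > 0" unfolding f_def by (rule ff_pos[OF e hp])
  have s1: "\<And>t. f (-t) = f t" "\<And>t. f (pi - t) = f t" "\<And>t. f (t + pi) = f t"
    unfolding f_def ff_def by (simp_all add: cos_diff cos_add)
  note sf = sym_facts[OF fc s1, folded F_def]
  have Fpi: "F pi > 0" using oint_mono[OF fc fp pi_gt_zero] oint_0[of f] by (simp add: F_def)
  have F1: "F (pi/2) = F pi / 2" using sf(2)[of "pi/2"] by simp
  have F2: "F (3*pi/2) = 3 * F pi / 2" using sf(3)[of "pi/2"] F1 by (simp add: field_simps)
  have F3: "F (2*pi) = 2 * F pi" using sf(3)[of "pi"] by simp
  have F4: "F (-(pi/2)) = - F pi / 2" using sf(1)[of "pi/2"] F1 by simp
  have Fm: "a < b \<Longrightarrow> F a < F b" for a b unfolding F_def by (rule oint_mono[OF fc fp])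
  have cf: "cfun eps h = pi / F pi"
  proof -
    have I: "integral {0..2*pi} (\<lambda>ch. 1 / afun eps ch h) = 2 * F pi"
      using F3 by (simp add: afun_ff[OF e hp] F_def f_def oint_def)
    show ?thesis unfolding cfun_def I
      by (rule the_equality) (use Fpi in \<open>auto simp: field_simps\<close>)
  qed
  have Q: "Qxv eps x v = pi / F pi * F (chi eps x v)"
    by (simp add: Qxv_def Qfun_def h_def[symmetric] cf afun_ff[OF e hp] F_def f_def)
  show ?thesis
  proof (cases "x = 0")
    case True
    then have v: "v \<noteq> 0" using nz by auto
    have cx: "chi eps x v = pi - arcsin s" using True by (simp add: chi_def s_def h_def)
    have "h = v^2 / 2" using True by (simp add: h_def Ham_def Phi_def)
    then have e2: "2*h = v^2" by simp
    have "sqrt (2*h) = \<bar>v\<bar>" unfolding e2 by simp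
    then have ss: "s = sgn v" using v by (simp add: s_def sgn_if)
    show ?thesis
    proof (cases "v > 0")
      case True
      then have c: "chi eps x v = pi / 2" using cx ss by simp
      have qv: "Qxv eps x v = pi / 2" using Q[unfolded c] F1 Fpi by simp
      have "angle_eq (Qxv eps x v) (pi / 2)" unfolding angle_eq_def qv
        by (intro exI[of _ 0]) simp
      then show ?thesis using \<open>x = 0\<close> by simp
    next
      case False
      then have "v < 0" using v by simp
      then have c: "chi eps x v = 3 * pi / 2" using cx ss by simp
      have qv: "Qxv eps x v = 3 * pi / 2" using Q[unfolded c] F2 Fpi by simp
      have "angle_eq (Qxv eps x v) (- pi / 2)" unfolding angle_eq_def qv
        by (intro exI[of _ 1]) simp
      then show ?thesis using \<open>x = 0\<close> by simp
    qed
  next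
    case False
    have "s^2 < 1" using cp(4) False by simp
    then have sb: "-1 < s" "s < 1" by (simp_all add: abs_square_less_1 abs_less_iff)
    note ab = arcsin_lt_bounded[OF sb]
    have cpos: "pi / F pi > 0" using Fpi by simp
    have "-(pi/2) < Qxv eps x v \<and> Qxv eps x v < pi/2 \<or> pi/2 < Qxv eps x v \<and> Qxv eps x v < 3*pi/2"
    proof (cases "x > 0")
      case True
      then have c: "chi eps x v = arcsin s" by (simp add: chi_def s_def h_def)
      have "F (-(pi/2)) < F (chi eps x v)" "F (chi eps x v) < F (pi/2)" using Fm ab unfolding c by auto
      then have "pi / F pi * F (-(pi/2)) < pi / F pi * F (chi eps x v)" "pi / F pi * F (chi eps x v) < pi / F pi * F (pi/2)"
        using mult_strict_left_mono[OF _ cpos] by blast+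
      then have "pi / F pi * F (-(pi/2)) < Qxv eps x v" "Qxv eps x v < pi / F pi * F (pi/2)"
        unfolding Q by auto
      then show ?thesis using F1 F4 Fpi by simp
    next
      case False
      then have c: "chi eps x v = pi - arcsin s" by (simp add: chi_def s_def h_def)
      have "F (pi/2) < F (chi eps x v)" "F (chi eps x v) < F (3*pi/2)" using Fm ab unfolding c by auto
      then have "pi / F pi * F (pi/2) < pi / F pi * F (chi eps x v)" "pi / F pi * F (chi eps x v) < pi / F pi * F (3*pi/2)"
        using mult_strict_left_mono[OF _ cpos] by blast+
      then have "pi / F pi * F (pi/2) < Qxv eps x v" "Qxv eps x v < pi / F pi * F (3*pi/2)"
        unfolding Q by auto
      then show ?thesis using F1 F2 Fpi by simp
    qed
    then have "\<not> angle_eq (Qxv eps x v) (pi / 2)" "\<not> angle_eq (Qxv eps x v) (- pi / 2)"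
      using angle_eq_small[of "Qxv eps x v" "pi/2"] angle_eq_small[of "Qxv eps x v" "-pi/2"]
      by (auto simp: abs_less_iff)
    then show ?thesis using False by simp
  qed
qed

theorem lemma5p2:
  fixes eps :: real
  assumes "eps > 0"
  shows "{p :: real \<times> real. fst p = 0} =
     {(x, v). (x, v) \<noteq> (0, 0) \<and> angle_eq (Qxv eps x v) (pi / 2)}
     \<union> {(x, v). (x, v) \<noteq> (0, 0) \<and> angle_eq (Qxv eps x v) (- pi / 2)}
     \<union> {(0, 0)}"
  using main_pt[OF assms] by fastforce

end
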